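(* Let $t\ge 2$ and let $G$ be a graph of order $n$ with vertex degrees $d_1,\ldots,d_n$. Let $\overline{q}_1,\ldots,\overline{q}_n$ be the eigenvalues of the signless Laplacian of the complement $\overline{G}$. Then the eigenvalues of the signless Laplacian of $\overline{G^{(t)}}$ (the complement of the blowup $G^{(t)}$) are, as a multiset, $t\overline{q}_1+2(t-1),\ldots,t\overline{q}_n+2(t-1)$ together with $tn-td_1-2,\ldots,tn-td_n-2$, where each of $tn-td_1-2,\ldots,tn-td_n-2$ is taken with multiplicity $t-1$.
   Context: Graphs are finite and simple; $\overline{H}$ denotes the complement of a graph $H$. The signless Laplacian of a graph with adjacency matrix $A$ and diagonal degree matrix $D$ is $Q=D+A$. For an integer $t\ge1$, the blowup $G^{(t)}$ is obtained from $G$ by replacing each vertex $u$ by a set $V_u$ of $t$ pairwise nonadjacent vertices and each edge $\{u,v\}$ of $G$ by the complete bipartite graph between $V_u$ and $V_v$ (and no other edges). *)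

theory Defs
  imports "Jordan_Normal_Form.Char_Poly" "HOL-Library.Multiset"
begin

text \<open>A simple graph of order n: vertex set {0..<n}, edge relation E that is
  symmetric and irreflexive on {0..<n} (values outside {0..<n} are irrelevant).\<close>
definition simple_graph :: "nat \<Rightarrow> (nat \<Rightarrow> nat \<Rightarrow> bool) \<Rightarrow> bool" where
  "simple_graph n E \<longleftrightarrow> (\<forall>i<n. \<forall>j<n. E i j \<longrightarrow> E j i) \<and> (\<forall>i<n. \<not> E i i)"

definition degree :: "nat \<Rightarrow> (nat \<Rightarrow> nat \<Rightarrow> bool) \<Rightarrow> nat \<Rightarrow> nat" where
  "degree n E i = card {j. j < n \<and> E i j}"

definition complement :: "(nat \<Rightarrow> nat \<Rightarrow> bool) \<Rightarrow> nat \<Rightarrow> nat \<Rightarrow> bool" where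
  "complement E i j \<longleftrightarrow> i \<noteq> j \<and> \<not> E i j"

text \<open>Blowup G^(t) of a graph on {0..<n}: vertex set {0..<n*t}, where the
  class V_u of vertex u is {u*t ..< u*t+t}; vertex x lies in class x div t.
  x, y are adjacent iff their classes are adjacent in G.\<close>
definition blowup :: "nat \<Rightarrow> (nat \<Rightarrow> nat \<Rightarrow> bool) \<Rightarrow> nat \<Rightarrow> nat \<Rightarrow> bool" where
  "blowup t E x y \<longleftrightarrow> E (x div t) (y div t)"

definition signless_laplacian :: "nat \<Rightarrow> (nat \<Rightarrow> nat \<Rightarrow> bool) \<Rightarrow> real mat" where
  "signless_laplacian n E = mat n n (\<lambda>(i,j).
      if i = j then real (degree n E i) else if E i j then 1 else 0)"

definition eigenvalue_mset :: "real mat \<Rightarrow> real multiset \<Rightarrow> bool" where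
  "eigenvalue_mset A M \<longleftrightarrow> char_poly A = (\<Prod>a\<in>#M. [:- a, 1:])"

end

theory Submission imports Defs "Jordan_Normal_Form.Schur_Decomposition" begin

lemma class_sum:
  fixes g :: "nat \<Rightarrow> real"
  assumes "j < n" "t > 0"
  shows "(\<Sum>x\<in>{0..<t*n}. g x * (if x div t = j then 1 else 0)) = (\<Sum>k<t. g (j*t+k))"
proof -
  have "(\<Sum>x\<in>{0..<t*n}. g x * (if x div t = j then 1 else 0)) = (\<Sum>x\<in>{x\<in>{0..<t*n}. x div t = j}. g x)"
    by (simp add: sum.inter_filter[symmetric] if_distrib cong: if_cong) 
  also have "{x\<in>{0..<t*n}. x div t = j} = (\<lambda>k. j*t+k) ` {..<t}"
  proof -
    { fix x assume "x \<in> {x\<in>{0..<t*n}. x div t = j}"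
      then have "x = j*t + x mod t" "x mod t < t" using assms div_mult_mod_eq[of x t] by auto
      then have "x \<in> (\<lambda>k. j*t+k) ` {..<t}" by blast }
    moreover
    { fix x assume "x \<in> (\<lambda>k. j*t+k) ` {..<t}"
      then obtain k where k: "k < t" "x = j*t+k" by auto
      have "j*t + k < t*n" using assms k
      proof -
        have "j*t+k < (j+1)*t" using k by simp
        also have "\<dots> \<le> n*t" using assms(1) by (intro mult_le_mono1) simp
        finally show ?thesis by (simp add: mult.commute)
      qed
      then have "x \<in> {x\<in>{0..<t*n}. x div t = j}" using k by auto }
    ultimately show ?thesis by blast
  qed
  also have "(\<Sum>x\<in>(\<lambda>k. j*t+k) ` {..<t}. g x) = (\<Sum>k<t. g (j*t+k))"
    by (rule sum.reindex_cong[where l="\<lambda>k. j*t+k"]) (auto simp: inj_on_def)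
  finally show ?thesis .
qed

definition uu :: "nat \<Rightarrow> nat \<Rightarrow> nat \<Rightarrow> nat" where "uu n t j = (j-n) div (t-1)"
definition kk :: "nat \<Rightarrow> nat \<Rightarrow> nat \<Rightarrow> nat" where "kk n t j = (j-n) mod (t-1) + 1"

lemma uu_kk:
  assumes "t \<ge> 2" "n \<le> j" "j < t*n"
  shows "uu n t j < n" "kk n t j \<ge> 1" "kk n t j < t" "uu n t j * t + kk n t j < t*n"
    "j = n + uu n t j * (t-1) + (kk n t j - 1)"
proof -
  have "j - n < n*(t-1)" using assms by (simp add: algebra_simps diff_mult_distrib2)
  moreover have "t - 1 > 0" using assms by simp
  ultimately show u: "uu n t j < n" unfolding uu_def by (simp add: div_less_iff_less_mult mult.commute)
  show "kk n t j \<ge> 1" by (simp add: kk_def)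
  have "(j-n) mod (t-1) < t-1" using assms by simp
  then show k: "kk n t j < t" unfolding kk_def by simp
  have "uu n t j * t + kk n t j < uu n t j * t + t" using k by simp
  also have "\<dots> = (uu n t j + 1) * t" by simp
  also have "\<dots> \<le> n * t" using u by (intro mult_le_mono1) simp
  finally show "uu n t j * t + kk n t j < t*n" by (simp add: mult.commute)
  show "j = n + uu n t j * (t-1) + (kk n t j - 1)" unfolding uu_def kk_def using assms
    using div_mult_mod_eq[of "j-n" "t-1"] assms(2) by linarith
qed

lemma uu_kk_inj:
  assumes "t \<ge> 2" "n \<le> j" "j < t*n" "n \<le> j'" "j' < t*n"
    "uu n t j = uu n t j'" "kk n t j = kk n t j'"
  shows "j = j'"
  using uu_kk(5)[OF assms(1-3)] uu_kk(5)[OF assms(1,4,5)] assms(6,7) by simp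

lemma mt_eq:
  fixes a b k l t :: nat
  assumes "k < t" "l < t"
  shows "a*t+k = b*t+l \<longleftrightarrow> a = b \<and> k = l"
proof
  assume h: "a*t+k = b*t+l"
  have "(a*t+k) div t = a" "(b*t+l) div t = b" "(a*t+k) mod t = k" "(b*t+l) mod t = l" using assms by auto
  then show "a = b \<and> k = l" using h by metis
qed simp

definition Pm :: "nat \<Rightarrow> nat \<Rightarrow> real mat" where
  "Pm n t = mat (t*n) (t*n) (\<lambda>(x,j). if j < n then (if x div t = j then 1 else 0)
     else (if x = uu n t j * t + kk n t j then 1 else 0) - (if x = uu n t j * t then 1 else 0))"

definition Pinv :: "nat \<Rightarrow> nat \<Rightarrow> real mat" where
  "Pinv n t = mat (t*n) (t*n) (\<lambda>(j,x). if j < n then (if x div t = j then 1 / real t else 0)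
     else (if x = uu n t j * t + kk n t j then 1 else 0) - (if x div t = uu n t j then 1 / real t else 0))"

lemma col_P:
  fixes g :: "nat \<Rightarrow> real"
  assumes "t \<ge> 2" "j < t*n"
  shows "(\<Sum>x\<in>{0..<t*n}. g x * Pm n t $$ (x,j)) =
    (if j < n then (\<Sum>k<t. g (j*t+k)) else g (uu n t j * t + kk n t j) - g (uu n t j * t))"
proof (cases "j < n")
  case True
  then have "(\<Sum>x\<in>{0..<t*n}. g x * Pm n t $$ (x,j)) = (\<Sum>x\<in>{0..<t*n}. g x * (if x div t = j then 1 else 0))"
    using assms by (intro sum.cong) (auto simp: Pm_def)
  then show ?thesis using class_sum[OF True, of t g] assms True by simp
next
  case False
  let ?u = "uu n t j" and ?k = "kk n t j"
  have b: "?u * t + ?k < t*n" "?u * t < t*n" using uu_kk[OF assms(1) _ assms(2)] False by auto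
  have "(\<Sum>x\<in>{0..<t*n}. g x * Pm n t $$ (x,j)) =
     (\<Sum>x\<in>{0..<t*n}. (if x = ?u * t + ?k then g x else 0)) - (\<Sum>x\<in>{0..<t*n}. (if x = ?u*t then g x else 0))"
    unfolding sum_subtractf[symmetric]
    using assms False by (intro sum.cong) (auto simp: Pm_def)
  also have "\<dots> = g (?u * t + ?k) - g (?u * t)" using b by (simp add: sum.delta)
  finally show ?thesis using False by simp
qed

lemma mult_entry:
  assumes "A \<in> carrier_mat m k" "B \<in> carrier_mat k l" "i < m" "j < l"
  shows "(A * B) $$ (i,j) = (\<Sum>x\<in>{0..<k}. A $$ (i,x) * B $$ (x,j))"
  using assms by (auto simp: scalar_prod_def intro!: sum.cong)

lemma Pm_carrier: "Pm n t \<in> carrier_mat (t*n) (t*n)" by (simp add: Pm_def)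
lemma Pinv_carrier: "Pinv n t \<in> carrier_mat (t*n) (t*n)" by (simp add: Pinv_def)


lemma Pinv_P:
  assumes "t \<ge> 2"
  shows "Pinv n t * Pm n t = 1\<^sub>m (t*n)"
proof (rule eq_matI)
  fix j j' assume j: "j < dim_row (1\<^sub>m (t*n))" and j': "j' < dim_col (1\<^sub>m (t*n))"
  then have j: "j < t*n" and j': "j' < t*n" by auto
  have "(Pinv n t * Pm n t) $$ (j,j') = (\<Sum>x\<in>{0..<t*n}. Pinv n t $$ (j,x) * Pm n t $$ (x,j'))"
    using j j' by (rule mult_entry[OF Pinv_carrier Pm_carrier])
  also have "\<dots> = (if j' < n then (\<Sum>k<t. Pinv n t $$ (j, j'*t+k))
     else Pinv n t $$ (j, uu n t j' * t + kk n t j') - Pinv n t $$ (j, uu n t j' * t))"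
    by (rule col_P[OF assms j'])
  also have "\<dots> = (if j = j' then 1 else 0)"
  proof (cases "j' < n")
    case True
    have lt: "j'*t+k < t*n" if "k < t" for k
    proof -
      have "j'*t+k < (j'+1)*t" using that by simp
      also have "\<dots> \<le> n*t" using True by (intro mult_le_mono1) simp
      finally show ?thesis by (simp add: mult.commute)
    qed
    show ?thesis
    proof (cases "j < n")
      case True
      have "(\<Sum>k<t. Pinv n t $$ (j, j'*t+k)) = (\<Sum>k<t. if j = j' then 1 / real t else 0)"
        using True lt j by (intro sum.cong) (auto simp: Pinv_def)
      then show ?thesis using \<open>j' < n\<close> assms by simp
    next
      case False
      let ?u = "uu n t j" and ?k = "kk n t j"
      have uk: "?u < n" "?k < t" "?k \<ge> 1" using uu_kk[OF assms _ j] False by auto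
      have "(\<Sum>k<t. Pinv n t $$ (j, j'*t+k)) = (\<Sum>k<t. (if k = ?k \<and> j' = ?u then 1 else 0) - (if j' = ?u then 1/real t else 0))"
        using False lt j uk by (intro sum.cong) (auto simp: Pinv_def mt_eq)
      also have "\<dots> = 0" using uk assms unfolding sum_subtractf by (simp add: sum.delta)
      finally show ?thesis using \<open>j' < n\<close> False by simp
    qed
  next
    case False
    let ?u' = "uu n t j'" and ?k' = "kk n t j'"
    have uk': "?u' < n" "?k' < t" "?k' \<ge> 1" "?u' * t + ?k' < t*n" "?u' * t < t*n"
      using uu_kk[OF assms _ j'] False by auto
    show ?thesis
    proof (cases "j < n")
      case True
      then show ?thesis using False uk' j by (simp add: Pinv_def)
    next
      case jn: False
      let ?u = "uu n t j" and ?k = "kk n t j"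
      have uk: "?u < n" "?k < t" "?k \<ge> 1" using uu_kk[OF assms _ j] jn by auto
      have "Pinv n t $$ (j, ?u' * t + ?k') - Pinv n t $$ (j, ?u' * t) =
         (if ?u' = ?u \<and> ?k' = ?k then 1 else 0) - (if ?u' * t = ?u * t + ?k then 1 else 0)"
        using jn uk' j uk by (simp add: Pinv_def mt_eq)
      also have "\<dots> = (if j = j' then 1 else 0)"
        using uu_kk_inj[OF assms _ j _ j'] jn False uk uk' mt_eq[of 0 t ?k ?u' ?u]
        by auto
      finally show ?thesis using False jn by simp
    qed
  qed
  also have "\<dots> = 1\<^sub>m (t*n) $$ (j,j')" using j j' by simp
  finally show "(Pinv n t * Pm n t) $$ (j,j') = 1\<^sub>m (t*n) $$ (j,j')" .
qed (auto simp: Pm_def Pinv_def)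

lemma sum_blocks:
  fixes f :: "nat \<Rightarrow> real"
  shows "(\<Sum>y\<in>{0..<t*n}. f y) = (\<Sum>v<n. \<Sum>k<t. f (v*t+k))"
proof (induction n)
  case 0 then show ?case by simp
next
  case (Suc n)
  have "(\<Sum>y\<in>{0..<t*Suc n}. f y) = (\<Sum>y\<in>{0..<t*n}. f y) + (\<Sum>y\<in>{t*n..<t*n+t}. f y)"
    using sum.atLeastLessThan_concat[of 0 "t*n" "t*n+t" f] by (simp add: add.commute)
  also have "(\<Sum>y\<in>{t*n..<t*n+t}. f y) = (\<Sum>k<t. f (n*t+k))"
  proof -
    have "(\<Sum>y\<in>{t*n..<t*n+t}. f y) = (\<Sum>k\<in>{0..<t}. f (k + t*n))"
      using sum.shift_bounds_nat_ivl[of f 0 "t*n" t] by (simp add: add.commute)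
    then show ?thesis by (simp add: lessThan_atLeast0 add.commute mult.commute)
  qed
  finally show ?case using Suc by simp
qed

lemma real_card_filter: fixes n :: nat shows "real (card {j. j < n \<and> P j}) = (\<Sum>j\<in>{0..<n}. if P j then 1 else 0)"
proof -
  have "{j. j < n \<and> P j} = {j\<in>{0..<n}. P j}" by auto
  moreover have "real (card {j\<in>{0..<n}. P j}) = (\<Sum>j\<in>{j\<in>{0..<n}. P j}. 1)" by simp
  moreover have "(\<Sum>j\<in>{j\<in>{0..<n}. P j}. 1) = (\<Sum>j\<in>{0..<n}. if P j then 1 else (0::real))"
    by (subst sum.inter_filter) auto
  ultimately show ?thesis by metis
qed

lemma deg_compl:
  assumes "simple_graph n E" "u < n"
  shows "real (degree n (complement E) u) = real n - 1 - real (degree n E u)"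
proof -
  have irr: "\<not> E u u" using assms unfolding simple_graph_def by blast
  have "real (degree n (complement E) u) = (\<Sum>j\<in>{0..<n}. if u \<noteq> j \<and> \<not> E u j then 1 else 0)"
    unfolding degree_def complement_def by (rule real_card_filter)
  also have "\<dots> = (\<Sum>j\<in>{0..<n}. 1 - (if E u j then 1 else 0) - (if j = u then 1 else 0))"
    using assms(2) irr by (intro sum.cong) auto
  also have "\<dots> = real n - (\<Sum>j\<in>{0..<n}. if E u j then 1 else 0) - 1"
    using assms by (simp add: sum_subtractf sum.delta)
  also have "(\<Sum>j\<in>{0..<n}. if E u j then 1 else 0) = real (degree n E u)"
    unfolding degree_def by (rule real_card_filter[symmetric])
  finally show ?thesis by simp
qed

lemma div_lt: fixes x t n :: nat assumes "x < t*n" "t > 0" shows "x div t < n"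
  using div_less_iff_less_mult[OF assms(2), of x n] assms(1) by (simp add: mult.commute)

lemma deg_blow:
  assumes "simple_graph n E" "x < t*n" "t > 0"
  shows "real (degree (t*n) (complement (blowup t E)) x) = real t * real n - real t * real (degree n E (x div t)) - 1"
proof -
  have xd: "x div t < n" using div_lt assms by blast
  have irr: "\<not> E (x div t) (x div t)" using assms xd unfolding simple_graph_def by blast
  have "real (degree (t*n) (complement (blowup t E)) x) = (\<Sum>y\<in>{0..<t*n}. if x \<noteq> y \<and> \<not> E (x div t) (y div t) then 1 else 0)"
    unfolding degree_def complement_def blowup_def by (rule real_card_filter)
  also have "\<dots> = (\<Sum>y\<in>{0..<t*n}. (if \<not> E (x div t) (y div t) then 1 else 0) - (if y = x then 1 else 0))"
    using irr by (intro sum.cong) auto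
  also have "\<dots> = (\<Sum>y\<in>{0..<t*n}. (if \<not> E (x div t) (y div t) then 1 else 0)) - 1"
    using assms by (simp add: sum_subtractf sum.delta)
  also have "(\<Sum>y\<in>{0..<t*n}. (if \<not> E (x div t) (y div t) then 1 else (0::real))) = (\<Sum>v<n. \<Sum>k<t. if \<not> E (x div t) v then 1 else 0)"
    using assms by (simp add: sum_blocks)
  also have "\<dots> = real t * (\<Sum>v<n. 1 - (if E (x div t) v then 1 else 0))"
    by (simp add: sum_distrib_left, intro sum.cong, auto) 
  also have "\<dots> = real t * (real n - real (degree n E (x div t)))"
    unfolding degree_def real_card_filter by (simp add: sum_subtractf lessThan_atLeast0)
  finally show ?thesis by (simp add: algebra_simps)
qed

definition Qb :: "nat \<Rightarrow> (nat \<Rightarrow> nat \<Rightarrow> bool) \<Rightarrow> real mat" where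
  "Qb n E = signless_laplacian n (complement E)"
definition Qp :: "nat \<Rightarrow> nat \<Rightarrow> (nat \<Rightarrow> nat \<Rightarrow> bool) \<Rightarrow> real mat" where
  "Qp n t E = signless_laplacian (t*n) (complement (blowup t E))"
definition Bq :: "nat \<Rightarrow> nat \<Rightarrow> (nat \<Rightarrow> nat \<Rightarrow> bool) \<Rightarrow> real mat" where
  "Bq n t E = real t \<cdot>\<^sub>m Qb n E + (2 * real t - 2) \<cdot>\<^sub>m 1\<^sub>m n"
definition dv :: "nat \<Rightarrow> nat \<Rightarrow> (nat \<Rightarrow> nat \<Rightarrow> bool) \<Rightarrow> nat \<Rightarrow> real" where
  "dv n t E u = real t * real n - real t * real (degree n E u) - 2"
definition Bm :: "nat \<Rightarrow> nat \<Rightarrow> (nat \<Rightarrow> nat \<Rightarrow> bool) \<Rightarrow> real mat" where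
  "Bm n t E = mat (t*n) (t*n) (\<lambda>(i,j). if i < n \<and> j < n then Bq n t E $$ (i,j)
      else if i = j then dv n t E (uu n t j) else 0)"

lemma Qp_entry:
  assumes "simple_graph n E" "t > 0" "x < t*n" "y < t*n"
  shows "Qp n t E $$ (x,y) = (if x = y then real t * real n - real t * real (degree n E (x div t)) - 1
     else if E (x div t) (y div t) then 0 else 1)"
  using assms deg_blow[OF assms(1,3,2)] by (cases "x = y") (simp_all add: Qp_def signless_laplacian_def complement_def blowup_def)

lemma Bq_entry:
  assumes "simple_graph n E" "u < n" "v < n"
  shows "Bq n t E $$ (u,v) = (if u = v then real t * (real n - 1 - real (degree n E u)) + 2 * real t - 2
     else if E u v then 0 else real t)"
  using assms deg_compl[OF assms(1,2)] by (cases "u = v") (simp_all add: Bq_def Qb_def signless_laplacian_def complement_def)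

lemma Qp_carrier: "Qp n t E \<in> carrier_mat (t*n) (t*n)" by (simp add: Qp_def signless_laplacian_def)
lemma Bm_carrier: "Bm n t E \<in> carrier_mat (t*n) (t*n)" by (simp add: Bm_def)

lemma QP_PB:
  assumes G: "simple_graph n E" and t: "t \<ge> 2"
  shows "Qp n t E * Pm n t = Pm n t * Bm n t E"
proof (rule eq_matI)
  fix x j assume x: "x < dim_row (Pm n t * Bm n t E)" and j: "j < dim_col (Pm n t * Bm n t E)"
  then have x: "x < t*n" and j: "j < t*n" by (auto simp: Pm_def Bm_def)
  have t0: "t > 0" using t by simp
  have xd: "x div t < n" using div_lt[OF x t0] .
  have xm: "x mod t < t" using t0 by simp
  have xeq: "x = x div t * t + x mod t" by simp
  have irr: "\<not> E (x div t) (x div t)" using G xd unfolding simple_graph_def by blast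
  have L: "(Qp n t E * Pm n t) $$ (x,j) = (if j < n then (\<Sum>k<t. Qp n t E $$ (x, j*t+k))
       else Qp n t E $$ (x, uu n t j * t + kk n t j) - Qp n t E $$ (x, uu n t j * t))"
    by (subst mult_entry[OF Qp_carrier Pm_carrier x j]) (rule col_P[OF t j])
  have R: "(Pm n t * Bm n t E) $$ (x,j) = (if j < n then Bq n t E $$ (x div t, j) else Pm n t $$ (x,j) * dv n t E (uu n t j))"
  proof (cases "j < n")
    case True
    have "(Pm n t * Bm n t E) $$ (x,j) = (\<Sum>i\<in>{0..<t*n}. Pm n t $$ (x,i) * Bm n t E $$ (i,j))"
      by (rule mult_entry[OF Pm_carrier Bm_carrier x j])
    also have "\<dots> = (\<Sum>i\<in>{0..<t*n}. if i = x div t then Bq n t E $$ (x div t, j) else 0)"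
      using True x j xd by (intro sum.cong) (auto simp: Pm_def Bm_def)
    also have "\<dots> = Bq n t E $$ (x div t, j)"
    proof -
      have "n \<le> t*n" using t0 by simp
      then have "x div t < t*n" using xd by linarith
      then show ?thesis by (simp add: sum.delta)
    qed
    finally show ?thesis using True by simp
  next
    case False
    have "(Pm n t * Bm n t E) $$ (x,j) = (\<Sum>i\<in>{0..<t*n}. Pm n t $$ (x,i) * Bm n t E $$ (i,j))"
      by (rule mult_entry[OF Pm_carrier Bm_carrier x j])
    also have "\<dots> = (\<Sum>i\<in>{0..<t*n}. if i = j then Pm n t $$ (x,j) * dv n t E (uu n t j) else 0)"
      using False x j by (intro sum.cong) (auto simp: Bm_def)
    also have "\<dots> = Pm n t $$ (x,j) * dv n t E (uu n t j)" using j by (simp add: sum.delta)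
    finally show ?thesis using False by simp
  qed
  show "(Qp n t E * Pm n t) $$ (x,j) = (Pm n t * Bm n t E) $$ (x,j)"
  proof (cases "j < n")
    case True
    have lt: "j*t+k < t*n" if "k < t" for k
    proof -
      have "j*t+k < (j+1)*t" using that by simp
      also have "\<dots> \<le> n*t" using True by (intro mult_le_mono1) simp
      finally show ?thesis by (simp add: mult.commute)
    qed
    show ?thesis
    proof (cases "x div t = j")
      case True
      have "(\<Sum>k<t. Qp n t E $$ (x, j*t+k)) = (\<Sum>k<t. 1 + (if k = x mod t then real t * real n - real t * real (degree n E j) - 2 else 0))"
        using lt x True irr by (intro sum.cong) (auto simp: Qp_entry[OF G t0] mt_eq xm)
      also have "\<dots> = real t + (real t * real n - real t * real (degree n E j) - 2)"
        using xm by (simp add: sum.distrib sum.delta)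
      finally show ?thesis using L R True \<open>j < n\<close> Bq_entry[where t=t, OF G xd \<open>j<n\<close>] by (simp add: algebra_simps)
    next
      case False
      have "(\<Sum>k<t. Qp n t E $$ (x, j*t+k)) = (\<Sum>k<t. if E (x div t) j then 0 else 1)"
        using lt x False by (intro sum.cong) (auto simp: Qp_entry[OF G t0])
      then show ?thesis using L R False \<open>j < n\<close> Bq_entry[where t=t, OF G xd \<open>j<n\<close>] by simp
    qed
  next
    case False
    let ?u = "uu n t j" and ?k = "kk n t j"
    have uk: "?u < n" "?k < t" "?k \<ge> 1" "?u * t + ?k < t*n" "?u * t < t*n"
      using uu_kk[OF t _ j] False by auto
    have P: "Pm n t $$ (x,j) = (if x = ?u * t + ?k then 1 else 0) - (if x = ?u * t then 1 else 0)"
      using x j False by (simp add: Pm_def)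
    show ?thesis
    proof (cases "x div t = ?u")
      case True
      have "Qp n t E $$ (x, ?u * t + ?k) = (if x mod t = ?k then real t * real n - real t * real (degree n E ?u) - 1 else 1)"
        using uk x True irr xeq by (auto simp: Qp_entry[OF G t0] mt_eq)
      moreover have "Qp n t E $$ (x, ?u * t) = (if x mod t = 0 then real t * real n - real t * real (degree n E ?u) - 1 else 1)"
        using uk x True irr xeq by (auto simp: Qp_entry[OF G t0])
      moreover have "Pm n t $$ (x,j) = (if x mod t = ?k then 1 else 0) - (if x mod t = 0 then 1 else 0)"
        using P True xeq by auto
      ultimately show ?thesis using L R False uk by (auto simp: dv_def)
    next
      case nu: False
      have "x \<noteq> ?u * t + ?k" "x \<noteq> ?u * t" using nu uk by auto
      moreover have "(?u * t + ?k) div t = ?u" "(?u * t) div t = ?u" using uk by auto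
      ultimately show ?thesis using L R False P x uk by (simp add: Qp_entry[OF G t0])
    qed
  qed
qed (auto simp: Pm_def Bm_def Qp_def signless_laplacian_def)

lemma prod_affine_eval:
  fixes c d k :: real and M :: "real multiset"
  assumes "c \<noteq> 0"
  shows "poly (\<Prod>a\<in>#M. [:-(c*a+d),1:]) k = c ^ size M * poly (\<Prod>a\<in>#M. [:-a,1:]) ((k-d)/c)"
proof (induction M)
  case empty then show ?case by simp
next
  case (add x M)
  have eq: "k - (c*x+d) = c * ((k-d)/c - x)" using assms by (simp add: field_simps)
  have L: "poly (\<Prod>a\<in>#add_mset x M. [:-(c*a+d),1:]) k = (k - (c*x+d)) * poly (\<Prod>a\<in>#M. [:-(c*a+d),1:]) k" by (simp add: algebra_simps)
  have R: "poly (\<Prod>a\<in>#add_mset x M. [:-a,1:]) y = (y - x) * poly (\<Prod>a\<in>#M. [:-a,1:]) y" for y by (simp add: algebra_simps)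
  have "poly (\<Prod>a\<in>#add_mset x M. [:-(c*a+d),1:]) k = (c * ((k-d)/c - x)) * (c ^ size M * poly (\<Prod>a\<in>#M. [:-a,1:]) ((k-d)/c))"
    by (simp only: L add.IH eq)
  also have "\<dots> = c ^ size (add_mset x M) * poly (\<Prod>a\<in>#add_mset x M. [:-a,1:]) ((k-d)/c)"
    by (simp only: R size_add_mset power_Suc mult_ac)
  finally show ?case .
qed

lemma prod_lin_degree:
  fixes M :: "real multiset"
  shows "(\<Prod>a\<in>#M. [:-a,1:]) \<noteq> 0 \<and> Polynomial.degree (\<Prod>a\<in>#M. [:-a,1:]) = size M"
proof (induction M)
  case empty then show ?case by simp
next
  case (add x M)
  let ?p = "\<Prod>a\<in>#M. [:-a,1:]"
  have nz: "?p \<noteq> 0" and dg: "Polynomial.degree ?p = size M" using add by auto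
  have e: "(\<Prod>a\<in>#add_mset x M. [:-a,1:]) = [:-x,1:] * ?p" by simp
  have l: "[:-x,1:] \<noteq> (0::real poly)" by simp
  have "[:-x,1:] * ?p \<noteq> 0" using no_zero_divisors[OF l nz] .
  moreover have "Polynomial.degree ([:-x,1:] * ?p) = Suc (size M)"
    using degree_mult_eq[OF l nz] dg by simp
  ultimately show ?case unfolding e by simp
qed

lemma char_poly_affine:
  fixes A :: "real mat" and c d :: real
  assumes A: "A \<in> carrier_mat n n" and c: "c \<noteq> 0" and cp: "char_poly A = (\<Prod>a\<in>#M. [:-a,1:])"
  shows "char_poly (c \<cdot>\<^sub>m A + d \<cdot>\<^sub>m 1\<^sub>m n) = (\<Prod>a\<in>#M. [:-(c*a+d),1:])"
proof -
  have sz: "size M = n" using prod_lin_degree[of M] degree_monic_char_poly[OF A] cp by simp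
  have B: "c \<cdot>\<^sub>m A + d \<cdot>\<^sub>m 1\<^sub>m n \<in> carrier_mat n n" using A by simp
  have "poly (char_poly (c \<cdot>\<^sub>m A + d \<cdot>\<^sub>m 1\<^sub>m n)) k = poly (\<Prod>a\<in>#M. [:-(c*a+d),1:]) k" for k
  proof -
    have e: "- char_matrix (c \<cdot>\<^sub>m A + d \<cdot>\<^sub>m 1\<^sub>m n) k = c \<cdot>\<^sub>m (- char_matrix A ((k-d)/c))"
      by (rule eq_matI) (insert A c, auto simp: char_matrix_def field_simps)
    have "poly (char_poly (c \<cdot>\<^sub>m A + d \<cdot>\<^sub>m 1\<^sub>m n)) k = det (- char_matrix (c \<cdot>\<^sub>m A + d \<cdot>\<^sub>m 1\<^sub>m n) k)"
      by (rule char_poly_matrix[OF B])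
    also have "\<dots> = c ^ n * det (- char_matrix A ((k-d)/c))" unfolding e using char_matrix_closed[OF A, of "(k-d)/c"] by simp
    also have "\<dots> = c ^ n * poly (char_poly A) ((k-d)/c)" using char_poly_matrix[OF A] by simp
    also have "\<dots> = poly (\<Prod>a\<in>#M. [:-(c*a+d),1:]) k" using prod_affine_eval[OF c, of d M k] cp sz by simp
    finally show ?thesis .
  qed
  then show ?thesis using poly_eq_poly_eq_iff by blast
qed

lemma mset_blocks:
  fixes g :: "nat \<Rightarrow> 'b"
  assumes "a > 0"
  shows "mset (map (\<lambda>i. g (i div a)) [0..<n*a]) = repeat_mset a (mset (map g [0..<n]))"
proof (induction n)
  case 0 then show ?case by simp
next
  case (Suc n)
  have u: "[0..<Suc n * a] = [0..<n*a] @ [n*a..<n*a+a]"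
    using upt_add_eq_append[of 0 "n*a" a] by (simp add: add.commute)
  have "map (\<lambda>i. g (i div a)) [n*a..<n*a+a] = replicate a (g n)"
    using assms by (intro nth_equalityI) (auto simp: nth_append)
  then have "mset (map (\<lambda>i. g (i div a)) [0..<Suc n * a]) = mset (map (\<lambda>i. g (i div a)) [0..<n*a]) + replicate_mset a (g n)"
    unfolding u by simp
  then show ?case using Suc by simp
qed

lemma similar_QB:
  assumes G: "simple_graph n E" and t: "t \<ge> 2"
  shows "similar_mat (Qp n t E) (Bm n t E)"
proof -
  have PP: "Pm n t * Pinv n t = 1\<^sub>m (t*n)"
    by (rule mat_mult_left_right_inverse[OF Pinv_carrier Pm_carrier Pinv_P[OF t]])
  have "Qp n t E = Qp n t E * (Pm n t * Pinv n t)" using PP right_mult_one_mat[OF Qp_carrier[of n t E]] by simp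
  also have "\<dots> = (Qp n t E * Pm n t) * Pinv n t"
    by (rule assoc_mult_mat[symmetric, OF Qp_carrier Pm_carrier Pinv_carrier])
  also have "\<dots> = Pm n t * Bm n t E * Pinv n t" by (simp add: QP_PB[OF G t])
  finally have e: "Qp n t E = Pm n t * Bm n t E * Pinv n t" .
  have "similar_mat_wit (Qp n t E) (Bm n t E) (Pm n t) (Pinv n t)"
  proof -
    have dim: "dim_row (Qp n t E) = t*n" by (simp add: Qp_def signless_laplacian_def)
    show ?thesis unfolding similar_mat_wit_def Let_def dim
      using PP Pinv_P[OF t, of n] Qp_carrier[of n t E] Bm_carrier[of n t E] Pm_carrier[of n t] Pinv_carrier[of n t]
      by (simp add: e[symmetric])
  qed
  then show ?thesis unfolding similar_mat_def by blast
qed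

theorem theorem10:
  fixes n t :: nat and E :: "nat \<Rightarrow> nat \<Rightarrow> bool" and Qbar :: "real multiset"
  assumes "t \<ge> 2"
    and "simple_graph n E"
    and "eigenvalue_mset (signless_laplacian n (complement E)) Qbar"
  shows "eigenvalue_mset (signless_laplacian (t * n) (complement (blowup t E)))
           (image_mset (\<lambda>q. real t * q + 2 * (real t - 1)) Qbar
            + repeat_mset (t - 1)
                (mset (map (\<lambda>i. real t * real n - real t * real (degree n E i) - 2) [0..<n])))"
proof -
  note t = assms(1) and G = assms(2)
  define a where "a = t - 1"
  have a0: "a > 0" using t by (simp add: a_def)
  have mn: "t*n - n = n*a" by (simp add: a_def diff_mult_distrib2 mult.commute)
  have mn2: "n + n*a = t*n" using t by (cases t) (auto simp: a_def algebra_simps)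
  define Dg where "Dg = mat (n*a) (n*a) (\<lambda>(i,j). if i = j then dv n t E (i div a) else (0::real))"
  have Dc: "Dg \<in> carrier_mat (n*a) (n*a)" by (simp add: Dg_def)
  have Qbc: "Qb n E \<in> carrier_mat n n" by (simp add: Qb_def signless_laplacian_def)
  have Bqc: "Bq n t E \<in> carrier_mat n n" using Qbc by (simp add: Bq_def)
  have four: "Bm n t E = four_block_mat (Bq n t E) (0\<^sub>m n (n*a)) (0\<^sub>m (n*a) n) Dg"
  proof (rule eq_matI)
    fix i j assume i: "i < dim_row (four_block_mat (Bq n t E) (0\<^sub>m n (n*a)) (0\<^sub>m (n*a) n) Dg)"
      and j: "j < dim_col (four_block_mat (Bq n t E) (0\<^sub>m n (n*a)) (0\<^sub>m (n*a) n) Dg)"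
    then have i': "i < t*n" and j': "j < t*n" using Bqc Dc mn2 by auto
    show "Bm n t E $$ (i,j) = four_block_mat (Bq n t E) (0\<^sub>m n (n*a)) (0\<^sub>m (n*a) n) Dg $$ (i,j)"
      using i j i' j' Bqc Dc by (auto simp: Bm_def Dg_def uu_def a_def)
  qed (insert Bqc Dc mn2, auto simp: Bm_def)
  obtain xs where xs: "Qbar = mset xs" using ex_mset[of Qbar] by metis
  have cpQ: "char_poly (Qb n E) = (\<Prod>a\<in>#Qbar. [:-a,1:])" using assms(3) by (simp add: eigenvalue_mset_def Qb_def)
  have cpB: "char_poly (Bq n t E) = (\<Prod>a\<in>#Qbar. [:-(real t*a + (2*real t - 2)),1:])"
    unfolding Bq_def by (rule char_poly_affine[OF Qbc _ cpQ]) (use t in simp)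
  have cpB': "char_poly (Bq n t E) = (\<Prod>a\<in>#image_mset (\<lambda>q. real t * q + 2 * (real t - 1)) Qbar. [:-a,1:])"
    unfolding cpB by (simp add: image_mset.compositionality o_def algebra_simps)
  have ut: "upper_triangular Dg" by (simp add: upper_triangular_def Dg_def)
  have cpD: "char_poly Dg = (\<Prod>a\<leftarrow>diag_mat Dg. [:-a,1:])" by (rule char_poly_upper_triangular[OF Dc ut])
  have dg: "diag_mat Dg = map (\<lambda>i. dv n t E (i div a)) [0..<n*a]"
    by (intro nth_equalityI) (auto simp: diag_mat_def Dg_def)
  have cpD': "char_poly Dg = (\<Prod>a\<in># repeat_mset a (mset (map (dv n t E) [0..<n])). [:-a,1:])"
    unfolding cpD dg mset_blocks[OF a0, of "dv n t E" n, symmetric]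
    by (simp only: mset_map[symmetric] prod_mset_prod_list)
  have "char_poly (Qp n t E) = char_poly (Bm n t E)" by (rule char_poly_similar[OF similar_QB[OF G t]])
  also have "\<dots> = char_poly (Bq n t E) * char_poly Dg"
  proof -
    have "char_poly (Bq n t E) = (\<Prod>a\<leftarrow>map (\<lambda>q. real t * q + 2 * (real t - 1)) xs. [:-a,1:])"
      unfolding cpB' xs by (simp only: mset_map[symmetric] prod_mset_prod_list)
    then have lB: "\<exists>es. char_poly (Bq n t E) = (\<Prod>a\<leftarrow>es. [:-a,1:])" by blast
    have lD: "\<exists>es. char_poly Dg = (\<Prod>a\<leftarrow>es. [:-a,1:])" using cpD by blast
    show ?thesis by (rule char_poly_0_block[OF four lB lD Bqc _ Dc]) simp
  qed
  also have "\<dots> = (\<Prod>a\<in>#image_mset (\<lambda>q. real t * q + 2 * (real t - 1)) Qbar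
            + repeat_mset (t - 1) (mset (map (\<lambda>i. real t * real n - real t * real (degree n E i) - 2) [0..<n])). [:-a,1:])"
  proof -
    have "dv n t E = (\<lambda>i. real t * real n - real t * real (degree n E i) - 2)" by (rule ext) (simp add: dv_def)
    then show ?thesis unfolding cpB' cpD' by (simp add: a_def)
  qed
  finally show ?thesis unfolding eigenvalue_mset_def Qp_def .
qed

end
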